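(* Let $k$ be a field and let $M$ be the commutative monoid generated by elements $r_1,\ldots,r_{n_1},s_1,\ldots,s_{n_2}$ subject to the single relation $\sum_{i=1}^{n_1}r_i=\sum_{j=1}^{n_2}s_j$. Then any small $\mathbb{Q}$-factorialization of the affine toric variety $W=\mathrm{Spec}(k[M])$ is a log resolution.
   Context: Small $\mathbb{Q}$-factorializations of the toric variety $W$ are understood as toric ones, i.e. the toric varieties given by simplicial subdivisions of the cone of $W$ that introduce no new rays; a log resolution here means the variety is smooth (so its torus-invariant boundary is snc). *)

theory Defs
  imports "HOL-Analysis.Analysis"
begin

text \<open>Combinatorial model of the affine toric variety W = Spec k[M], where M is the
commutative monoid generated by r_i (i in 'a) and s_j (j in 'b) subject to
sum r_i = sum s_j.  The dual lattice N = Hom(M^gp, Z) is realised inside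
real^('a+'b) as the integer points of the hyperplane sum_i a_i = sum_j b_j,
and the cone of W is the nonnegative part of that hyperplane.\<close>

definition hyp :: "(real^('a::finite + 'b::finite)) set" where
  "hyp = {v. (\<Sum>i\<in>UNIV. v $ Inl i) = (\<Sum>j\<in>UNIV. v $ Inr j)}"

definition latN :: "(real^('a::finite + 'b::finite)) set" where
  "latN = {v \<in> hyp. \<forall>k. v $ k \<in> \<int>}"

definition sigma_cone :: "(real^('a::finite + 'b::finite)) set" where
  "sigma_cone = {v \<in> hyp. \<forall>k. 0 \<le> v $ k}"

definition ray :: "'a \<Rightarrow> 'b \<Rightarrow> real^('a::finite + 'b::finite)" where
  "ray i j = axis (Inl i) 1 + axis (Inr j) 1"

definition rays :: "(real^('a::finite + 'b::finite)) set" where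
  "rays = {ray i j | i j. True}"

definition pos_hull :: "'v::real_vector set \<Rightarrow> 'v set" where
  "pos_hull S = {\<Sum>v\<in>S. c v *\<^sub>R v | c. \<forall>v\<in>S. 0 \<le> c v}"

definition int_span :: "'v::real_vector set \<Rightarrow> 'v set" where
  "int_span S = {\<Sum>v\<in>S. of_int (c v) *\<^sub>R v | c. True}"

definition lattice_basis :: "(real^('a::finite + 'b::finite)) set \<Rightarrow> bool" where
  "lattice_basis B \<longleftrightarrow> finite B \<and> independent B \<and> int_span B = latN"

definition smooth_cone :: "(real^('a::finite + 'b::finite)) set \<Rightarrow> bool" where
  "smooth_cone S \<longleftrightarrow> (\<exists>B. S \<subseteq> B \<and> lattice_basis B)"

text \<open>A small Q-factorialization of W: a fan, given by the generator sets of its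
cones, consisting of simplicial cones spanned by rays of sigma (no new rays),
closed under faces, any two cones meeting in a common face, with support sigma.\<close>
definition small_Q_factorialization ::
  "(real^('a::finite + 'b::finite)) set set \<Rightarrow> bool" where
  "small_Q_factorialization F \<longleftrightarrow>
     finite F \<and>
     (\<forall>S\<in>F. S \<subseteq> rays \<and> independent S) \<and>
     (\<forall>S\<in>F. \<forall>T. T \<subseteq> S \<longrightarrow> T \<in> F) \<and>
     (\<forall>S\<in>F. \<forall>T\<in>F. pos_hull S \<inter> pos_hull T = pos_hull (S \<inter> T)) \<and>
     \<Union> (pos_hull ` F) = sigma_cone"

text \<open>The toric variety of F is a log resolution iff it is smooth, i.e. every cone is smooth.\<close>
definition log_resolution :: "(real^('a::finite + 'b::finite)) set set \<Rightarrow> bool" where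
  "log_resolution F \<longleftrightarrow> (\<forall>S\<in>F. smooth_cone S)"

end

theory Submission
  imports Defs
begin

lemma int_span_zero: "0 \<in> int_span S"
  unfolding int_span_def by (rule CollectI, rule exI[of _ "\<lambda>_. 0"]) simp

lemma int_span_add: "x \<in> int_span S \<Longrightarrow> y \<in> int_span S \<Longrightarrow> x + y \<in> int_span S"
proof -
  assume "x \<in> int_span S" "y \<in> int_span S"
  then obtain c d where "x = (\<Sum>v\<in>S. of_int (c v) *\<^sub>R v)" "y = (\<Sum>v\<in>S. of_int (d v) *\<^sub>R v)"
    unfolding int_span_def by auto
  then have "x + y = (\<Sum>v\<in>S. of_int (c v + d v) *\<^sub>R v)"
    by (simp add: sum.distrib scaleR_add_left)
  then show ?thesis unfolding int_span_def by (intro CollectI exI[of _ "\<lambda>v. c v + d v"]) simp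
qed

lemma int_span_scale: "x \<in> int_span S \<Longrightarrow> of_int n *\<^sub>R x \<in> int_span S"
proof -
  assume "x \<in> int_span S"
  then obtain c where "x = (\<Sum>v\<in>S. of_int (c v) *\<^sub>R v)"
    unfolding int_span_def by auto
  then have "of_int n *\<^sub>R x = (\<Sum>v\<in>S. of_int (n * c v) *\<^sub>R v)"
    by (simp add: scaleR_sum_right)
  then show ?thesis unfolding int_span_def by (intro CollectI exI[of _ "\<lambda>v. n * c v"]) simp
qed

lemma int_span_neg: "x \<in> int_span S \<Longrightarrow> - x \<in> int_span S"
  using int_span_scale[of x S "-1"] by simp

lemma int_span_diff: "x \<in> int_span S \<Longrightarrow> y \<in> int_span S \<Longrightarrow> x - y \<in> int_span S"
  using int_span_add[of x S "-y"] int_span_neg[of y S] by simp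

lemma int_span_base: "finite S \<Longrightarrow> x \<in> S \<Longrightarrow> x \<in> int_span S"
proof -
  assume "finite S" "x \<in> S"
  then have "x = (\<Sum>v\<in>S. of_int (if v = x then 1 else 0) *\<^sub>R v)"
    by (simp add: if_distrib[of "\<lambda>c. of_int c *\<^sub>R _"] cong: if_cong)
  then show ?thesis unfolding int_span_def by (intro CollectI exI[of _ "\<lambda>v. if v = x then 1 else 0"]) simp
qed

lemma int_span_sum: "finite A \<Longrightarrow> (\<And>a. a \<in> A \<Longrightarrow> f a \<in> int_span S) \<Longrightarrow> sum f A \<in> int_span S"
  by (induction A rule: finite_induct) (auto intro: int_span_add int_span_zero)

lemma ray_comp: "ray i j $ k = (if k = Inl i \<or> k = Inr j then 1 else 0)"
  unfolding ray_def axis_def by auto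

lemma ray_latN: "ray i j \<in> latN"
  unfolding latN_def hyp_def by (simp add: ray_comp)

lemma rays_latN: "rays \<subseteq> latN"
  unfolding rays_def using ray_latN by blast

lemma finite_rays: "finite (rays :: (real^('a::finite + 'b::finite)) set)"
proof -
  have "(rays :: (real^('a + 'b)) set) = (\<lambda>(i,j). ray i j) ` (UNIV :: ('a \<times> 'b) set)"
    unfolding rays_def by auto
  then show ?thesis by (metis finite finite_imageI)
qed

lemma int_span_latN:
  assumes "B \<subseteq> latN"
  shows "int_span B \<subseteq> latN"
proof
  fix x assume "x \<in> int_span B"
  then obtain c where x: "x = (\<Sum>v\<in>B. of_int (c v) *\<^sub>R v)"
    unfolding int_span_def by auto
  have "\<forall>k. x $ k \<in> \<int>"
    using assms unfolding x latN_def by (auto intro!: Ints_sum Ints_mult)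
  moreover have "x \<in> hyp"
  proof -
    have "(\<Sum>i\<in>UNIV. x $ Inl i) = (\<Sum>v\<in>B. of_int (c v) * (\<Sum>i\<in>UNIV. v $ Inl i))"
      unfolding x by (simp add: sum_distrib_left sum.swap[of _ UNIV])
    also have "\<dots> = (\<Sum>v\<in>B. of_int (c v) * (\<Sum>i\<in>UNIV. v $ Inr i))"
      using assms unfolding latN_def hyp_def by (intro sum.cong) auto
    also have "\<dots> = (\<Sum>i\<in>UNIV. x $ Inr i)"
      unfolding x by (simp add: sum_distrib_left sum.swap[of _ UNIV])
    finally show ?thesis unfolding hyp_def by simp
  qed
  ultimately show "x \<in> latN" unfolding latN_def by simp
qed

lemma latN_sub:
  fixes B :: "(real^('a::finite + 'b::finite)) set"
  assumes R: "\<And>i j. ray i j \<in> int_span B"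
  shows "latN \<subseteq> int_span B"
proof
  fix v :: "real^('a + 'b)" assume v: "v \<in> latN"
  define n where "n k = \<lfloor>v $ k\<rfloor>" for k
  have vn: "v $ k = of_int (n k)" for k
    using v unfolding latN_def n_def by auto
  obtain i0 :: 'a where True by blast
  obtain j0 :: 'b where True by blast
  have hs: "(\<Sum>i\<in>UNIV. of_int (n (Inl i))) = (\<Sum>j\<in>UNIV. (of_int (n (Inr j)) :: real))"
    using v unfolding latN_def hyp_def by (simp add: vn)
  have eq: "v = (\<Sum>i\<in>UNIV. of_int (n (Inl i)) *\<^sub>R ray i j0) + (\<Sum>j\<in>UNIV. of_int (n (Inr j)) *\<^sub>R ray i0 j)
      - of_int (\<Sum>i\<in>UNIV. n (Inl i)) *\<^sub>R ray i0 j0"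
  proof (subst vec_eq_iff, intro allI)
    fix k show "v $ k = ((\<Sum>i\<in>UNIV. of_int (n (Inl i)) *\<^sub>R ray i j0) + (\<Sum>j\<in>UNIV. of_int (n (Inr j)) *\<^sub>R ray i0 j)
      - of_int (\<Sum>i\<in>UNIV. n (Inl i)) *\<^sub>R ray i0 j0) $ k"
    proof (cases k)
      case (Inl i)
      then show ?thesis using hs by (auto simp: vn ray_comp if_distrib cong: if_cong)
    next
      case (Inr j)
      then show ?thesis using hs by (auto simp: vn ray_comp if_distrib cong: if_cong)
    qed
  qed
  show "v \<in> int_span B"
    unfolding eq
    by (intro int_span_diff int_span_add int_span_sum int_span_scale R) auto
qed

definition eps :: "'a + 'b \<Rightarrow> real" where
  "eps u = (case u of Inl _ \<Rightarrow> 1 | Inr _ \<Rightarrow> -1)"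

definition wv :: "'a + 'b \<Rightarrow> real^('a::finite + 'b::finite)" where
  "wv u = axis u (eps u)"

lemma ray_wv: "ray i j = wv (Inl i) - wv (Inr j)"
  unfolding ray_def wv_def eps_def by (simp add: axis_def vec_eq_iff)

lemma eps_sq: "eps u * eps u = 1"
  unfolding eps_def by (cases u) auto

lemma key:
  fixes B :: "(real^('a::finite + 'b::finite)) set"
  assumes fin: "finite B" and BR: "B \<subseteq> rays" and RS: "rays \<subseteq> span B"
  shows "ray i j \<in> int_span B"
proof -
  obtain i0 :: 'a where True by blast
  define C where "C = {u. wv u - wv (Inl i0) \<in> int_span B}"
  define L where "L x = (\<Sum>u\<in>C. eps u * x $ u)" for x :: "real^('a + 'b)"
  have lin: "linear L"
  proof (rule linearI)
    fix x y :: "real^('a + 'b)" and c :: real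
    show "L (x + y) = L x + L y" by (simp add: L_def sum.distrib distrib_left)
    show "L (c *\<^sub>R x) = c *\<^sub>R L x" by (simp add: L_def sum_distrib_left mult.left_commute)
  qed
  have Lw: "L (wv u) = (if u \<in> C then 1 else 0)" for u
  proof -
    have "L (wv u) = (\<Sum>v\<in>C. if v = u then eps u * eps u else 0)"
      unfolding L_def wv_def by (intro sum.cong) (auto simp: axis_def)
    then show ?thesis using eps_sq[of u] by simp
  qed
  have Lray: "L (ray i j) = (if Inl i \<in> C then 1 else 0) - (if Inr j \<in> C then 1 else 0)" for i j
    unfolding ray_wv using lin Lw by (simp add: linear_diff)
  have L0: "L x = 0" if "x \<in> B" for x
  proof -
    from that BR obtain i j where x: "x = ray i j" unfolding rays_def by auto
    have "x \<in> int_span B" using int_span_base[OF fin that] .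
    then have d: "wv (Inl i) - wv (Inr j) \<in> int_span B" unfolding x ray_wv .
    have e1: "wv (Inr j) - wv (Inl i0) = (wv (Inl i) - wv (Inl i0)) - (wv (Inl i) - wv (Inr j))" by simp
    have e2: "wv (Inl i) - wv (Inl i0) = (wv (Inr j) - wv (Inl i0)) + (wv (Inl i) - wv (Inr j))" by simp
    have "Inl i \<in> C \<longleftrightarrow> Inr j \<in> C"
    proof
      assume "Inl i \<in> C"
      then have "wv (Inl i) - wv (Inl i0) \<in> int_span B" by (simp add: C_def)
      from int_span_diff[OF this d] show "Inr j \<in> C" unfolding C_def mem_Collect_eq e1 .
    next
      assume "Inr j \<in> C"
      then have "wv (Inr j) - wv (Inl i0) \<in> int_span B" by (simp add: C_def)
      from int_span_add[OF this d] show "Inl i \<in> C" unfolding C_def mem_Collect_eq e2 .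
    qed
    then show ?thesis unfolding x by (simp only: Lray)
  qed
  have Lr: "L (ray i j) = 0" for i j
  proof -
    have "ray i j \<in> span B" using RS unfolding rays_def by auto
    then show ?thesis by (rule linear_eq_0_on_span[OF lin, rotated]) (rule L0)
  qed
  have allC: "u \<in> C" for u
  proof (rule ccontr)
    assume nu: "u \<notin> C"
    have i0C: "Inl i0 \<in> C" unfolding C_def using int_span_zero by simp
    show False
    proof (cases u)
      case (Inl i)
      obtain j :: 'b where True by blast
      show False
      proof (cases "Inr j \<in> C")
        case True then show False using Lr[of i j] nu Inl by (simp add: Lray)
      next
        case False then show False using Lr[of i0 j] i0C by (simp add: Lray)
      qed
    next
      case (Inr j)
      then show False using Lr[of i0 j] i0C nu by (simp add: Lray)
    qed
  qed
  show ?thesis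
  proof -
    have "ray i j = (wv (Inl i) - wv (Inl i0)) - (wv (Inr j) - wv (Inl i0))" unfolding ray_wv by simp
    moreover have "wv (Inl i) - wv (Inl i0) \<in> int_span B" using allC[of "Inl i"] by (simp add: C_def)
    moreover have "wv (Inr j) - wv (Inl i0) \<in> int_span B" using allC[of "Inr j"] by (simp add: C_def)
    ultimately show ?thesis using int_span_diff by metis
  qed
qed

theorem mainTheorem11:
  fixes F :: "(real^('a::finite + 'b::finite)) set set"
  assumes "small_Q_factorialization F"
  shows "log_resolution F"
  unfolding log_resolution_def smooth_cone_def
proof
  fix S assume "S \<in> F"
  then have "S \<subseteq> rays" "independent S"
    using assms unfolding small_Q_factorialization_def by auto
  then obtain B where B: "S \<subseteq> B" "B \<subseteq> rays" "independent B" "rays \<subseteq> span B"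
    by (meson maximal_independent_subset_extend)
  have fin: "finite B" using B(2) finite_rays finite_subset by blast
  have "int_span B = latN"
  proof
    show "int_span B \<subseteq> latN" using int_span_latN B(2) rays_latN by blast
    show "latN \<subseteq> int_span B" using latN_sub key[OF fin B(2) B(4)] by blast
  qed
  then show "\<exists>B. S \<subseteq> B \<and> lattice_basis B"
    using B fin unfolding lattice_basis_def by blast
qed

end
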